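(* Let $S$ be an abundant semigroup and let $S^0$ be an adequate transversal of $S$. Let $R=\{x\in S: e_x=e_{\bar x}\}$ and $L=\{x\in S: f_x=f_{\bar x}\}$. Then $S^0$ is a quasi-ideal of $S$ (i.e. $S^0SS^0\subseteq S^0$) if and only if $RL\subseteq S^0$.
   Context: For a semigroup $S$, $\mathcal{R}^\ast=\{(a,b)\in S\times S: \text{for all } x,y\in S^1,\ xa=ya \iff xb=yb\}$ and $\mathcal{L}^\ast$ is defined dually. $S$ is abundant if every $\mathcal{R}^\ast$-class and every $\mathcal{L}^\ast$-class contains an idempotent; adequate if it is abundant and its idempotents commute. In an adequate semigroup $a^+$ and $a^\ast$ denote the unique idempotents in the $\mathcal{R}^\ast$-class and $\mathcal{L}^\ast$-class of $a$. A subsemigroup $U$ of an abundant semigroup $S$ is a $\ast$-subsemigroup if $U$ is abundant and $\mathcal{L}^\ast_U=\mathcal{L}^\ast_S\cap(U\times U)$, $\mathcal{R}^\ast_U=\mathcal{R}^\ast_S\cap(U\times U)$. An adequate $\ast$-subsemigroup $S^0$ of an abundant semigroup $S$ is an adequate transversal of $S$ if for each $x\in S$ there is a unique $\bar x\in S^0$ and idempotents $e,f$ of $S$ with $x=e\bar x f$, $e\,\mathcal{L}\,\bar x^+$ and $f\,\mathcal{R}\,\bar x^\ast$ ($\mathcal{L},\mathcal{R}$ Green's relations); such $e,f$ are then uniquely determined by $x$ and are denoted $e_x$, $f_x$. *)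

theory Defs
  imports Main
begin

text \<open>A semigroup is given by a carrier set S and a binary operation m, closed and associative on S.
  Elements of S^1 are represented as options: None is the adjoined identity.\<close>

definition semigroup_on :: "'a set \<Rightarrow> ('a \<Rightarrow> 'a \<Rightarrow> 'a) \<Rightarrow> bool" where
  "semigroup_on S m \<longleftrightarrow> (\<forall>a\<in>S. \<forall>b\<in>S. m a b \<in> S) \<and>
     (\<forall>a\<in>S. \<forall>b\<in>S. \<forall>c\<in>S. m (m a b) c = m a (m b c))"

definition S1 :: "'a set \<Rightarrow> 'a option set" where
  "S1 S = insert None (Some ` S)"

fun lm :: "('a \<Rightarrow> 'a \<Rightarrow> 'a) \<Rightarrow> 'a option \<Rightarrow> 'a \<Rightarrow> 'a" where
  "lm m None a = a"
| "lm m (Some x) a = m x a"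

fun rm :: "('a \<Rightarrow> 'a \<Rightarrow> 'a) \<Rightarrow> 'a \<Rightarrow> 'a option \<Rightarrow> 'a" where
  "rm m a None = a"
| "rm m a (Some x) = m a x"

definition idems :: "'a set \<Rightarrow> ('a \<Rightarrow> 'a \<Rightarrow> 'a) \<Rightarrow> 'a set" where
  "idems S m = {e\<in>S. m e e = e}"

definition Rstar :: "'a set \<Rightarrow> ('a \<Rightarrow> 'a \<Rightarrow> 'a) \<Rightarrow> 'a \<Rightarrow> 'a \<Rightarrow> bool" where
  "Rstar S m a b \<longleftrightarrow> a \<in> S \<and> b \<in> S \<and>
     (\<forall>x\<in>S1 S. \<forall>y\<in>S1 S. lm m x a = lm m y a \<longleftrightarrow> lm m x b = lm m y b)"

definition Lstar :: "'a set \<Rightarrow> ('a \<Rightarrow> 'a \<Rightarrow> 'a) \<Rightarrow> 'a \<Rightarrow> 'a \<Rightarrow> bool" where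
  "Lstar S m a b \<longleftrightarrow> a \<in> S \<and> b \<in> S \<and>
     (\<forall>x\<in>S1 S. \<forall>y\<in>S1 S. rm m a x = rm m a y \<longleftrightarrow> rm m b x = rm m b y)"

definition GreenL :: "'a set \<Rightarrow> ('a \<Rightarrow> 'a \<Rightarrow> 'a) \<Rightarrow> 'a \<Rightarrow> 'a \<Rightarrow> bool" where
  "GreenL S m a b \<longleftrightarrow> a \<in> S \<and> b \<in> S \<and> (\<lambda>x. lm m x a) ` S1 S = (\<lambda>x. lm m x b) ` S1 S"

definition GreenR :: "'a set \<Rightarrow> ('a \<Rightarrow> 'a \<Rightarrow> 'a) \<Rightarrow> 'a \<Rightarrow> 'a \<Rightarrow> bool" where
  "GreenR S m a b \<longleftrightarrow> a \<in> S \<and> b \<in> S \<and> (\<lambda>x. rm m a x) ` S1 S = (\<lambda>x. rm m b x) ` S1 S"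

definition abundant :: "'a set \<Rightarrow> ('a \<Rightarrow> 'a \<Rightarrow> 'a) \<Rightarrow> bool" where
  "abundant S m \<longleftrightarrow> semigroup_on S m \<and>
     (\<forall>a\<in>S. (\<exists>e\<in>idems S m. Rstar S m a e) \<and> (\<exists>e\<in>idems S m. Lstar S m a e))"

definition adequate :: "'a set \<Rightarrow> ('a \<Rightarrow> 'a \<Rightarrow> 'a) \<Rightarrow> bool" where
  "adequate S m \<longleftrightarrow> abundant S m \<and> (\<forall>e\<in>idems S m. \<forall>f\<in>idems S m. m e f = m f e)"

definition star_subsemigroup :: "'a set \<Rightarrow> ('a \<Rightarrow> 'a \<Rightarrow> 'a) \<Rightarrow> 'a set \<Rightarrow> bool" where
  "star_subsemigroup S m U \<longleftrightarrow> U \<subseteq> S \<and> (\<forall>a\<in>U. \<forall>b\<in>U. m a b \<in> U) \<and> abundant U m \<and>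
     (\<forall>a\<in>U. \<forall>b\<in>U. Lstar U m a b \<longleftrightarrow> Lstar S m a b) \<and>
     (\<forall>a\<in>U. \<forall>b\<in>U. Rstar U m a b \<longleftrightarrow> Rstar S m a b)"

definition plus :: "'a set \<Rightarrow> ('a \<Rightarrow> 'a \<Rightarrow> 'a) \<Rightarrow> 'a \<Rightarrow> 'a" where
  "plus U m a = (THE e. e \<in> idems U m \<and> Rstar U m a e)"

definition ast :: "'a set \<Rightarrow> ('a \<Rightarrow> 'a \<Rightarrow> 'a) \<Rightarrow> 'a \<Rightarrow> 'a" where
  "ast U m a = (THE e. e \<in> idems U m \<and> Lstar U m a e)"

definition tdec :: "'a set \<Rightarrow> ('a \<Rightarrow> 'a \<Rightarrow> 'a) \<Rightarrow> 'a set \<Rightarrow> 'a \<Rightarrow> 'a \<Rightarrow> 'a \<Rightarrow> 'a \<Rightarrow> bool" where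
  "tdec S m S0 x y e f \<longleftrightarrow> y \<in> S0 \<and> e \<in> idems S m \<and> f \<in> idems S m \<and>
     x = m (m e y) f \<and> GreenL S m e (plus S0 m y) \<and> GreenR S m f (ast S0 m y)"

definition adequate_transversal :: "'a set \<Rightarrow> ('a \<Rightarrow> 'a \<Rightarrow> 'a) \<Rightarrow> 'a set \<Rightarrow> bool" where
  "adequate_transversal S m S0 \<longleftrightarrow> abundant S m \<and> star_subsemigroup S m S0 \<and> adequate S0 m \<and>
     (\<forall>x\<in>S. \<exists>!y. \<exists>e f. tdec S m S0 x y e f)"

definition bar :: "'a set \<Rightarrow> ('a \<Rightarrow> 'a \<Rightarrow> 'a) \<Rightarrow> 'a set \<Rightarrow> 'a \<Rightarrow> 'a" where
  "bar S m S0 x = (THE y. \<exists>e f. tdec S m S0 x y e f)"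

definition ex :: "'a set \<Rightarrow> ('a \<Rightarrow> 'a \<Rightarrow> 'a) \<Rightarrow> 'a set \<Rightarrow> 'a \<Rightarrow> 'a" where
  "ex S m S0 x = (THE e. \<exists>f. tdec S m S0 x (bar S m S0 x) e f)"

definition fx :: "'a set \<Rightarrow> ('a \<Rightarrow> 'a \<Rightarrow> 'a) \<Rightarrow> 'a set \<Rightarrow> 'a \<Rightarrow> 'a" where
  "fx S m S0 x = (THE f. \<exists>e. tdec S m S0 x (bar S m S0 x) e f)"

end

theory Submission
  imports Defs
begin

locale AT =
  fixes S :: "'a set" and m :: "'a \<Rightarrow> 'a \<Rightarrow> 'a" and S0 :: "'a set"
  assumes at: "adequate_transversal S m S0"
begin

lemma sg: "semigroup_on S m" using at by (simp add: adequate_transversal_def abundant_def)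
lemma closed: "a\<in>S \<Longrightarrow> b\<in>S \<Longrightarrow> m a b \<in> S" using sg unfolding semigroup_on_def by blast
lemma assoc: "a\<in>S \<Longrightarrow> b\<in>S \<Longrightarrow> c\<in>S \<Longrightarrow> m (m a b) c = m a (m b c)"
  using sg unfolding semigroup_on_def by blast
lemma SS: "star_subsemigroup S m S0" using at by (simp add: adequate_transversal_def)
lemma S0S: "S0 \<subseteq> S" using SS unfolding star_subsemigroup_def by blast
lemma S0cl: "a\<in>S0 \<Longrightarrow> b\<in>S0 \<Longrightarrow> m a b \<in> S0" using SS unfolding star_subsemigroup_def by blast
lemma adS0: "adequate S0 m" using at by (simp add: adequate_transversal_def)
lemma RSeq: "a\<in>S0 \<Longrightarrow> b\<in>S0 \<Longrightarrow> Rstar S0 m a b = Rstar S m a b" using SS unfolding star_subsemigroup_def by blast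
lemma LSeq: "a\<in>S0 \<Longrightarrow> b\<in>S0 \<Longrightarrow> Lstar S0 m a b = Lstar S m a b" using SS unfolding star_subsemigroup_def by blast
lemma idS0: "idems S0 m \<subseteq> idems S m" using S0S by (auto simp: idems_def)

lemma plus_unique:
  assumes "e \<in> idems S0 m" "Rstar S0 m a e" "e' \<in> idems S0 m" "Rstar S0 m a e'"
  shows "e = e'"
proof -
  have H: "\<forall>x\<in>S1 S0. \<forall>y\<in>S1 S0. lm m x e = lm m y e \<longleftrightarrow> lm m x e' = lm m y e'"
    using assms(2,4) unfolding Rstar_def by metis
  have eS: "e \<in> S0" "e' \<in> S0" "m e e = e" "m e' e' = e'" using assms by (auto simp: idems_def)
  have s: "Some e \<in> S1 S0" "Some e' \<in> S1 S0" "None \<in> S1 S0" using eS by (auto simp: S1_def)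
  have 1: "m e' e = e" using H s eS by (metis lm.simps)
  have 2: "m e e' = e'" using H s eS by (metis lm.simps)
  have "m e e' = m e' e" using adS0 assms unfolding adequate_def by blast
  then show ?thesis using 1 2 by simp
qed

lemma ast_unique:
  assumes "e \<in> idems S0 m" "Lstar S0 m a e" "e' \<in> idems S0 m" "Lstar S0 m a e'"
  shows "e = e'"
proof -
  have H: "\<forall>x\<in>S1 S0. \<forall>y\<in>S1 S0. rm m e x = rm m e y \<longleftrightarrow> rm m e' x = rm m e' y"
    using assms(2,4) unfolding Lstar_def by metis
  have eS: "e \<in> S0" "e' \<in> S0" "m e e = e" "m e' e' = e'" using assms by (auto simp: idems_def)
  have s: "Some e \<in> S1 S0" "Some e' \<in> S1 S0" "None \<in> S1 S0" using eS by (auto simp: S1_def)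
  have 1: "m e e' = e" using H s eS by (metis rm.simps)
  have 2: "m e' e = e'" using H s eS by (metis rm.simps)
  have "m e e' = m e' e" using adS0 assms unfolding adequate_def by blast
  then show ?thesis using 1 2 by simp
qed

lemma plus_prop: assumes "a \<in> S0" shows "plus S0 m a \<in> idems S0 m \<and> Rstar S0 m a (plus S0 m a)"
proof -
  obtain e where "e \<in> idems S0 m" "Rstar S0 m a e"
    using adS0 assms unfolding adequate_def abundant_def by blast
  show ?thesis unfolding plus_def
  proof (rule theI[where P="\<lambda>e. e \<in> idems S0 m \<and> Rstar S0 m a e"])
    show "e \<in> idems S0 m \<and> Rstar S0 m a e" using \<open>e \<in> idems S0 m\<close> \<open>Rstar S0 m a e\<close> by blast
  next
    fix x assume "x \<in> idems S0 m \<and> Rstar S0 m a x"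
    then show "x = e" using plus_unique \<open>e \<in> idems S0 m\<close> \<open>Rstar S0 m a e\<close> by blast
  qed
qed

lemma ast_prop: assumes "a \<in> S0" shows "ast S0 m a \<in> idems S0 m \<and> Lstar S0 m a (ast S0 m a)"
proof -
  obtain e where "e \<in> idems S0 m" "Lstar S0 m a e"
    using adS0 assms unfolding adequate_def abundant_def by blast
  show ?thesis unfolding ast_def
  proof (rule theI[where P="\<lambda>e. e \<in> idems S0 m \<and> Lstar S0 m a e"])
    show "e \<in> idems S0 m \<and> Lstar S0 m a e" using \<open>e \<in> idems S0 m\<close> \<open>Lstar S0 m a e\<close> by blast
  next
    fix x assume "x \<in> idems S0 m \<and> Lstar S0 m a x"
    then show "x = e" using ast_unique \<open>e \<in> idems S0 m\<close> \<open>Lstar S0 m a e\<close> by blast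
  qed
qed

lemma plus_left: assumes "a \<in> S0" shows "m (plus S0 m a) a = a"
proof -
  let ?g = "plus S0 m a"
  have p: "?g \<in> S0" "m ?g ?g = ?g" "Rstar S0 m a ?g" using plus_prop[OF assms] by (auto simp: idems_def)
  have s: "Some ?g \<in> S1 S0" "None \<in> S1 S0" using p by (auto simp: S1_def)
  have "lm m (Some ?g) a = lm m None a" using p(2,3) s unfolding Rstar_def by (metis lm.simps)
  then show ?thesis by simp
qed

lemma ast_right: assumes "a \<in> S0" shows "m a (ast S0 m a) = a"
proof -
  let ?g = "ast S0 m a"
  have p: "?g \<in> S0" "m ?g ?g = ?g" "Lstar S0 m a ?g" using ast_prop[OF assms] by (auto simp: idems_def)
  have s: "Some ?g \<in> S1 S0" "None \<in> S1 S0" using p by (auto simp: S1_def)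
  have "rm m a (Some ?g) = rm m a None" using p(2,3) s unfolding Lstar_def by (metis rm.simps)
  then show ?thesis by simp
qed

lemma plus_idem: assumes "g \<in> idems S0 m" shows "plus S0 m g = g"
proof -
  have "g \<in> S0" using assms by (simp add: idems_def)
  then have "Rstar S0 m g g" by (simp add: Rstar_def)
  then show ?thesis using plus_prop[OF \<open>g \<in> S0\<close>] assms plus_unique by blast
qed

lemma ast_idem: assumes "g \<in> idems S0 m" shows "ast S0 m g = g"
proof -
  have "g \<in> S0" using assms by (simp add: idems_def)
  then have "Lstar S0 m g g" by (simp add: Lstar_def)
  then show ?thesis using ast_prop[OF \<open>g \<in> S0\<close>] assms ast_unique by blast
qed

lemma GL1: assumes "GreenL S m a b" "b \<in> idems S m" shows "m a b = a"
proof -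
  have "a \<in> (\<lambda>x. lm m x a) ` S1 S" by (force simp: S1_def)
  then have "a \<in> (\<lambda>x. lm m x b) ` S1 S" using assms(1) by (simp add: GreenL_def)
  then obtain t where t: "t \<in> S1 S" "a = lm m t b" by blast
  have b: "b \<in> S" "m b b = b" using assms(2) by (auto simp: idems_def)
  show ?thesis
  proof (cases t)
    case None then show ?thesis using t b by simp
  next
    case (Some u) then have "u \<in> S" using t by (auto simp: S1_def)
    then show ?thesis using t b Some assoc by simp
  qed
qed

lemma GL2: assumes "GreenL S m a b" "a \<in> idems S m" shows "m b a = b"
  using GL1[of b a] assms by (simp add: GreenL_def)

lemma GR1: assumes "GreenR S m a b" "b \<in> idems S m" shows "m b a = a"
proof -
  have "a \<in> (\<lambda>x. rm m a x) ` S1 S" by (force simp: S1_def)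
  then have "a \<in> (\<lambda>x. rm m b x) ` S1 S" using assms(1) by (simp add: GreenR_def)
  then obtain t where t: "t \<in> S1 S" "a = rm m b t" by blast
  have b: "b \<in> S" "m b b = b" using assms(2) by (auto simp: idems_def)
  show ?thesis
  proof (cases t)
    case None then show ?thesis using t b by simp
  next
    case (Some u) then have "u \<in> S" using t by (auto simp: S1_def)
    then show ?thesis using t b Some assoc by (simp flip: assoc)
  qed
qed

lemma GR2: assumes "GreenR S m a b" "a \<in> idems S m" shows "m a b = b"
  using GR1[of b a] assms by (simp add: GreenR_def)


lemma tdec_facts:
  assumes "tdec S m S0 x y e f"
  shows "y \<in> S0" "y \<in> S" "e \<in> S" "f \<in> S" "m e e = e" "m f f = f" "x = m (m e y) f"
    "m e (plus S0 m y) = e" "m (plus S0 m y) e = plus S0 m y"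
    "m (ast S0 m y) f = f" "m f (ast S0 m y) = ast S0 m y"
    "plus S0 m y \<in> S" "ast S0 m y \<in> S"
    "m (plus S0 m y) y = y" "m y (ast S0 m y) = y"
    "Rstar S m y (plus S0 m y)" "Lstar S m y (ast S0 m y)"
proof -
  have t: "y \<in> S0" "e \<in> idems S m" "f \<in> idems S m" "x = m (m e y) f"
    "GreenL S m e (plus S0 m y)" "GreenR S m f (ast S0 m y)"
    using assms by (auto simp: tdec_def)
  have pg: "plus S0 m y \<in> idems S0 m" "Rstar S0 m y (plus S0 m y)" using plus_prop t(1) by auto
  have ph: "ast S0 m y \<in> idems S0 m" "Lstar S0 m y (ast S0 m y)" using ast_prop t(1) by auto
  show "y \<in> S0" "x = m (m e y) f" using t by auto
  show "y \<in> S" using t S0S by auto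
  show "e \<in> S" "f \<in> S" "m e e = e" "m f f = f" using t by (auto simp: idems_def)
  show "m e (plus S0 m y) = e" using GL1 t pg idS0 by blast
  show "m (plus S0 m y) e = plus S0 m y" using GL2 t pg idS0 by blast
  show "m (ast S0 m y) f = f" using GR1 t ph idS0 by blast
  show "m f (ast S0 m y) = ast S0 m y" using GR2 t ph idS0 by blast
  show "plus S0 m y \<in> S" "ast S0 m y \<in> S" using pg ph S0S by (auto simp: idems_def)
  show "m (plus S0 m y) y = y" "m y (ast S0 m y) = y" using plus_left ast_right t by auto
  show "Rstar S m y (plus S0 m y)" using RSeq pg t by (auto simp: idems_def)
  show "Lstar S m y (ast S0 m y)" using LSeq ph t by (auto simp: idems_def)
qed

lemma e_half:
  assumes A: "tdec S m S0 x y e f" and B: "tdec S m S0 x y e' f'"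
  shows "m e' e = e"
proof -
  let ?g = "plus S0 m y" and ?h = "ast S0 m y"
  note a = tdec_facts[OF A] and b = tdec_facts[OF B]
  have "m e' x = x" using b by (simp add: assoc closed flip: assoc)
  then have "m e' (m (m e y) f) = m (m e y) f" using a by simp
  then have "m (m (m (m e' e) y) f) ?h = m (m (m e y) f) ?h" using a b by (simp add: assoc closed)
  then have "m (m e' e) y = m e y" using a b by (simp add: assoc closed)
  then have "lm m (Some (m e' e)) y = lm m (Some e) y" by simp
  moreover have "Some (m e' e) \<in> S1 S" "Some e \<in> S1 S" using a b closed by (auto simp: S1_def)
  ultimately have "lm m (Some (m e' e)) ?g = lm m (Some e) ?g" using a(16) unfolding Rstar_def by blast
  then show ?thesis using a b by (simp add: assoc closed)
qed

lemma f_half: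
  assumes A: "tdec S m S0 x y e f" and B: "tdec S m S0 x y e' f'"
  shows "m f f' = f"
proof -
  let ?g = "plus S0 m y" and ?h = "ast S0 m y"
  note a = tdec_facts[OF A] and b = tdec_facts[OF B]
  have "m x f' = x" using b by (simp add: assoc closed)
  then have "m (m (m e y) f) f' = m (m e y) f" using a by simp
  then have "m ?g (m (m (m e y) f) f') = m ?g (m (m e y) f)" by simp
  then have "m y (m f f') = m y f" using a b by (simp add: closed flip: assoc)
  then have "rm m y (Some (m f f')) = rm m y (Some f)" by simp
  moreover have "Some (m f f') \<in> S1 S" "Some f \<in> S1 S" using a b closed by (auto simp: S1_def)
  ultimately have "rm m ?h (Some (m f f')) = rm m ?h (Some f)" using a(17) unfolding Lstar_def by blast
  then show ?thesis using a b by (simp add: closed flip: assoc)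
qed

lemma tdec_unique:
  assumes A: "tdec S m S0 x y e f" and B: "tdec S m S0 x y e' f'"
  shows "e = e' \<and> f = f'"
proof -
  note a = tdec_facts[OF A] and b = tdec_facts[OF B]
  have 1: "m e' e = e" "m e e' = e'" using e_half A B by blast+
  have 2: "m f f' = f" "m f' f = f'" using f_half A B by blast+
  have "m e e' = e" using a b
    by (metis assoc)
  moreover have "m f' f = f" using a b by (metis assoc)
  ultimately show ?thesis using 1 2 by simp
qed

lemma ex1: "x \<in> S \<Longrightarrow> \<exists>!y. \<exists>e f. tdec S m S0 x y e f"
  using at by (simp add: adequate_transversal_def)

lemma tdec_S: "tdec S m S0 x y e f \<Longrightarrow> x \<in> S"
  using tdec_facts[of x y e f] closed by metis

lemma bar_eq: assumes "tdec S m S0 x y e f" shows "bar S m S0 x = y"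
  unfolding bar_def
proof (rule the1_equality[OF ex1[OF tdec_S[OF assms]]])
  show "\<exists>e f. tdec S m S0 x y e f" using assms by blast
qed

lemma ex_eq: assumes "tdec S m S0 x y e f" shows "ex S m S0 x = e"
  unfolding ex_def bar_eq[OF assms]
proof (rule the_equality)
  show "\<exists>f. tdec S m S0 x y e f" using assms by blast
next
  fix e' assume "\<exists>f. tdec S m S0 x y e' f"
  then show "e' = e" using assms tdec_unique by blast
qed

lemma fx_eq: assumes "tdec S m S0 x y e f" shows "fx S m S0 x = f"
  unfolding fx_def bar_eq[OF assms]
proof (rule the_equality)
  show "\<exists>e. tdec S m S0 x y e f" using assms by blast
next
  fix f' assume "\<exists>e. tdec S m S0 x y e f'"
  then show "f' = f" using assms tdec_unique by blast
qed

lemma tdec_S0: assumes "y \<in> S0" shows "tdec S m S0 y y (plus S0 m y) (ast S0 m y)"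
proof -
  have pg: "plus S0 m y \<in> idems S0 m" using plus_prop assms by auto
  have ph: "ast S0 m y \<in> idems S0 m" using ast_prop assms by auto
  have "plus S0 m y \<in> S" "ast S0 m y \<in> S" using pg ph S0S by (auto simp: idems_def)
  then show ?thesis unfolding tdec_def using pg ph idS0 assms plus_left ast_right
    by (auto simp: GreenL_def GreenR_def)
qed

lemma tdec_L: assumes g: "g \<in> idems S0 m" and e: "e \<in> idems S m" and G: "GreenL S m e g"
  shows "tdec S m S0 e g e g"
proof -
  have "m e g = e" using GL1 G g idS0 by blast
  moreover have "g \<in> S" "g \<in> S0" using g S0S by (auto simp: idems_def)
  ultimately show ?thesis unfolding tdec_def using g e G idS0 plus_idem ast_idem
    by (auto simp: GreenR_def)
qed

lemma tdec_R: assumes h: "h \<in> idems S0 m" and f: "f \<in> idems S m" and G: "GreenR S m f h"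
  shows "tdec S m S0 f h h f"
proof -
  have "m h f = f" using GR1 G h idS0 by blast
  moreover have "h \<in> S" "h \<in> S0" "m h h = h" using h S0S by (auto simp: idems_def)
  ultimately show ?thesis unfolding tdec_def using h f G idS0 plus_idem ast_idem
    by (auto simp: GreenL_def)
qed

end

theorem lemma1p4:
  fixes S S0 :: "'a set" and m :: "'a \<Rightarrow> 'a \<Rightarrow> 'a"
  assumes "abundant S m"
    and "adequate_transversal S m S0"
  defines "R \<equiv> {x\<in>S. ex S m S0 x = ex S m S0 (bar S m S0 x)}"
    and "L \<equiv> {x\<in>S. fx S m S0 x = fx S m S0 (bar S m S0 x)}"
  shows "(\<forall>a\<in>S0. \<forall>s\<in>S. \<forall>b\<in>S0. m (m a s) b \<in> S0) \<longleftrightarrow> (\<forall>r\<in>R. \<forall>l\<in>L. m r l \<in> S0)"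
proof -
  interpret AT S m S0 using assms(2) by unfold_locales
  have S0R: "a \<in> R" if "a \<in> S0" for a
    using that bar_eq[OF tdec_S0[OF that]] S0S unfolding R_def by auto
  have S0L: "a \<in> L" if "a \<in> S0" for a
    using that bar_eq[OF tdec_S0[OF that]] S0S unfolding L_def by auto
  show ?thesis
  proof
    assume H: "\<forall>a\<in>S0. \<forall>s\<in>S. \<forall>b\<in>S0. m (m a s) b \<in> S0"
    show "\<forall>r\<in>R. \<forall>l\<in>L. m r l \<in> S0"
    proof (intro ballI)
      fix r l assume r: "r \<in> R" and l: "l \<in> L"
      obtain y e f where ty: "tdec S m S0 r y e f" using ex1 r unfolding R_def by blast
      obtain z e' f' where tz: "tdec S m S0 l z e' f'" using ex1 l unfolding L_def by blast
      note a = tdec_facts[OF ty] and b = tdec_facts[OF tz]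
      have "e = plus S0 m y"
        using r ex_eq[OF ty] bar_eq[OF ty] ex_eq[OF tdec_S0[OF a(1)]] unfolding R_def by auto
      then have r': "r = m y f" using a by simp
      have "f' = ast S0 m z"
        using l fx_eq[OF tz] bar_eq[OF tz] fx_eq[OF tdec_S0[OF b(1)]] unfolding L_def by auto
      then have l': "l = m e' z" using b by (simp add: assoc)
      have "m r l = m (m y (m f e')) z" using r' l' a b by (simp add: assoc closed)
      then show "m r l \<in> S0" using H a b closed by simp
    qed
  next
    assume H: "\<forall>r\<in>R. \<forall>l\<in>L. m r l \<in> S0"
    show "\<forall>a\<in>S0. \<forall>s\<in>S. \<forall>b\<in>S0. m (m a s) b \<in> S0"
    proof (intro ballI)
      fix a s b assume a0: "a \<in> S0" and s: "s \<in> S" and b0: "b \<in> S0"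
      obtain y e f where ty: "tdec S m S0 s y e f" using ex1 s by blast
      note t = tdec_facts[OF ty]
      have td: "y \<in> S0" "e \<in> idems S m" "f \<in> idems S m"
        "GreenL S m e (plus S0 m y)" "GreenR S m f (ast S0 m y)"
        using ty by (auto simp: tdec_def)
      have pg: "plus S0 m y \<in> idems S0 m" using plus_prop td by auto
      have ph: "ast S0 m y \<in> idems S0 m" using ast_prop td by auto
      have pS0: "plus S0 m y \<in> S0" "ast S0 m y \<in> S0" using pg ph by (auto simp: idems_def)
      have te: "tdec S m S0 e (plus S0 m y) e (plus S0 m y)" using tdec_L pg td by blast
      have tf: "tdec S m S0 f (ast S0 m y) (ast S0 m y) f" using tdec_R ph td by blast
      have eL: "e \<in> L" unfolding L_def using bar_eq[OF te] fx_eq[OF te] t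
        fx_eq[OF tdec_S0[OF pS0(1)]] ast_idem[OF pg] by auto
      have fR: "f \<in> R" unfolding R_def using bar_eq[OF tf] ex_eq[OF tf] t
        ex_eq[OF tdec_S0[OF pS0(2)]] plus_idem[OF ph] by auto
      have 1: "m a e \<in> S0" using H S0R[OF a0] eL by blast
      have 2: "m f b \<in> S0" using H S0L[OF b0] fR by blast
      have 3: "m (m (m a e) y) (m f b) \<in> S0" using 1 2 td S0cl by blast
      have ab: "a \<in> S" "b \<in> S" using a0 b0 S0S by auto
      have "m (m a s) b = m (m (m a e) y) (m f b)" using t ab
        by (simp add: assoc closed)
      then show "m (m a s) b \<in> S0" using 3 by simp
    qed
  qed
qed

end
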